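(* Let $R$ be a transit function on a non-empty finite set $V$ satisfying axioms $(b2)$ and $(b3)$. Then for any $u,v,w\in V$ there exists $x\in R(u,v)\cap R(u,w)$ such that $R(x,v)\cap R(x,w)=\{x\}$.
   Context: A transit function on $V$ is a map $R:V\times V\to 2^V$ with $(t1)$ $u\in R(u,v)$, $(t2)$ $R(u,v)=R(v,u)$, $(t3)$ $R(u,u)=\{u\}$ for all $u,v\in V$. $(b2)$: if $x\in R(u,v)$ and $y\in R(u,x)$ then $y\in R(u,v)$. $(b3)$: if $x\in R(u,v)$ and $y\in R(u,x)$ then $x\in R(y,v)$. *)

theory Defs
  imports Main
begin

definition transit_function :: "'a set \<Rightarrow> ('a \<Rightarrow> 'a \<Rightarrow> 'a set) \<Rightarrow> bool" where
  "transit_function V R \<longleftrightarrow>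
     (\<forall>u\<in>V. \<forall>v\<in>V. R u v \<subseteq> V) \<and>
     (\<forall>u\<in>V. \<forall>v\<in>V. u \<in> R u v) \<and>
     (\<forall>u\<in>V. \<forall>v\<in>V. R u v = R v u) \<and>
     (\<forall>u\<in>V. R u u = {u})"

definition axiom_b2 :: "'a set \<Rightarrow> ('a \<Rightarrow> 'a \<Rightarrow> 'a set) \<Rightarrow> bool" where
  "axiom_b2 V R \<longleftrightarrow>
     (\<forall>u\<in>V. \<forall>v\<in>V. \<forall>x\<in>V. \<forall>y\<in>V. x \<in> R u v \<and> y \<in> R u x \<longrightarrow> y \<in> R u v)"

definition axiom_b3 :: "'a set \<Rightarrow> ('a \<Rightarrow> 'a \<Rightarrow> 'a set) \<Rightarrow> bool" where
  "axiom_b3 V R \<longleftrightarrow>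
     (\<forall>u\<in>V. \<forall>v\<in>V. \<forall>x\<in>V. \<forall>y\<in>V. x \<in> R u v \<and> y \<in> R u x \<longrightarrow> x \<in> R y v)"

end

theory Submission
  imports Defs
begin

theorem lemma3:
  fixes V :: "'a set" and R :: "'a \<Rightarrow> 'a \<Rightarrow> 'a set"
  assumes "finite V" and "V \<noteq> {}"
    and "transit_function V R" and "axiom_b2 V R" and "axiom_b3 V R"
    and "u \<in> V" and "v \<in> V" and "w \<in> V"
  shows "\<exists>x \<in> R u v \<inter> R u w. R x v \<inter> R x w = {x}"
proof -
  note T = assms(3)[unfolded transit_function_def]
  note B2 = assms(4)[unfolded axiom_b2_def]
  note B3 = assms(5)[unfolded axiom_b3_def]
  define S where "S = R u v \<inter> R u w"
  define f where "f x = card (R x v \<inter> R x w)" for x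
  have SV: "S \<subseteq> V" using T assms(6-8) S_def by blast
  have fin: "finite S" using SV assms(1) finite_subset by blast
  have ne: "u \<in> S" using T assms(6-8) S_def by blast
  have "\<exists>x\<in>S. \<forall>y\<in>S. f x \<le> f y"
  proof -
    have "Min (f ` S) \<in> f ` S" using fin ne by (intro Min_in) auto
    then obtain x where "x \<in> S" "f x = Min (f ` S)" by auto
    moreover have "\<forall>y\<in>S. Min (f ` S) \<le> f y" using fin by auto
    ultimately show ?thesis by metis
  qed
  then obtain x where xS: "x \<in> S" and xmin: "\<And>y. y \<in> S \<Longrightarrow> f x \<le> f y" by blast
  have xV: "x \<in> V" using xS SV by blast
  have xin: "x \<in> R x v \<inter> R x w" using T xV assms(7,8) by blast
  have "R x v \<inter> R x w \<subseteq> {x}"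
  proof
    fix y assume y: "y \<in> R x v \<inter> R x w"
    show "y \<in> {x}"
    proof (rule ccontr)
      assume yx: "y \<notin> {x}"
      have yV: "y \<in> V" using y T xV assms(7) by blast
      have xuv: "x \<in> R v u" "x \<in> R w u" using xS S_def T assms(6-8) by auto
      have yvx: "y \<in> R v x" "y \<in> R w x" using y T xV assms(7,8) by auto
      have "y \<in> R v u" "y \<in> R w u" using B2 xuv yvx xV yV assms(6-8) by blast+
      hence yS: "y \<in> S" using S_def T assms(6-8) by auto
      have sub: "R y v \<inter> R y w \<subseteq> R x v \<inter> R x w"
      proof
        fix z assume z: "z \<in> R y v \<inter> R y w"
        have zV: "z \<in> V" using z T yV assms(7) by blast
        have "z \<in> R v y" "z \<in> R w y" using z T yV assms(7,8) by auto
        hence "z \<in> R v x" "z \<in> R w x" using B2 yvx xV yV zV assms(7,8) by blast+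
        thus "z \<in> R x v \<inter> R x w" using T xV assms(7,8) by auto
      qed
      have "x \<notin> R y v"
      proof
        assume "x \<in> R y v"
        hence "x \<in> R v y" using T yV assms(7) by auto
        hence "y \<in> R x x" using B3 yvx xV yV assms(7) by blast
        thus False using T xV yx by auto
      qed
      hence "R y v \<inter> R y w \<subset> R x v \<inter> R x w" using sub xin by blast
      moreover have "finite (R x v \<inter> R x w)"
        using T xV assms(1,7) finite_subset by (metis inf.coboundedI1)
      ultimately have "f y < f x" unfolding f_def by (simp add: psubset_card_mono)
      thus False using xmin[OF yS] by simp
    qed
  qed
  hence "R x v \<inter> R x w = {x}" using xin by blast
  thus ?thesis using xS S_def by blast
qed

end
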